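(* Let $P\subseteq\mathbb{R}^d$ be a $d$-dimensional convex lattice polytope (all vertices in $\mathbb{Z}^d$) that contains no point of $\mathbb{Z}^d$ in its interior and all of whose facets are simplices. Then $P$ has at most $2^d$ vertices.
   Context: A lattice polytope with no lattice points in its interior is called hollow; this result states that the maximum number of vertices of a hollow simplicial lattice polytope in $\mathbb{R}^d$ is at most $2^d$. *)

theory Defs
  imports "HOL-Analysis.Analysis"
begin

definition lattice_point :: "real ^ 'n \<Rightarrow> bool" where
  "lattice_point x \<longleftrightarrow> (\<forall>i. x $ i \<in> \<int>)"

definition lattice_polytope :: "(real ^ 'n) set \<Rightarrow> bool" where
  "lattice_polytope P \<longleftrightarrow> polytope P \<and> (\<forall>v. v extreme_point_of P \<longrightarrow> lattice_point v)"

end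

theory Submission
  imports Defs
begin

lemma mid_indep:
  fixes u v :: "'a::euclidean_space"
  assumes T: "\<not> affine_dependent T" and uT: "u \<in> T" and vT: "v \<in> T" and uv: "u \<noteq> v"
  shows "midpoint u v \<notin> T" and "\<not> affine_dependent (insert (midpoint u v) (T - {u}))"
proof -
  let ?m = "midpoint u v"
  have fin: "finite T" using T aff_independent_finite by blast
  have mu: "?m \<noteq> u" and mv: "?m \<noteq> v" using uv by (auto simp: midpoint_eq_endpoint)
  have m_eq: "?m = (1/2) *\<^sub>R u + (1/2) *\<^sub>R v"
    by (simp add: midpoint_def scaleR_right_distrib)
  have u_eq: "u = 2 *\<^sub>R ?m + (-1) *\<^sub>R v"
    by (simp add: midpoint_def scaleR_right_distrib)
  have amid: "?m \<in> affine hull S" if "u \<in> affine hull S" "v \<in> affine hull S" for S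
  proof -
    have "(1/2) *\<^sub>R u + (1/2) *\<^sub>R v \<in> affine hull S"
      using that by (intro mem_affine[OF affine_affine_hull]) auto
    then show ?thesis by (simp only: m_eq[symmetric])
  qed
  have aback: "u \<in> affine hull S" if "?m \<in> affine hull S" "v \<in> affine hull S" for S
  proof -
    have "2 *\<^sub>R ?m + (-1) *\<^sub>R v \<in> affine hull S"
      using that by (intro mem_affine[OF affine_affine_hull]) auto
    then show ?thesis by (simp only: u_eq[symmetric])
  qed
  show mT: "?m \<notin> T"
  proof
    assume "?m \<in> T"
    have "u \<in> T - {?m}" using uT mu by (metis DiffI singletonD)
    have "v \<in> T - {?m}" using vT mv by (metis DiffI singletonD)
    have "?m \<in> affine hull (T - {?m})"
      by (rule amid) (use \<open>u \<in> T - {?m}\<close> \<open>v \<in> T - {?m}\<close> in \<open>simp_all add: hull_inc\<close>)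
    then show False using T \<open>?m \<in> T\<close> unfolding affine_dependent_def by blast
  qed
  let ?N = "insert ?m (T - {u})"
  have "?m \<in> affine hull T"
    using uT vT by (simp add: amid hull_inc)
  then have N1: "?N \<subseteq> affine hull T" using hull_subset[of T affine] by auto
  have "v \<in> ?N" using vT uv by simp
  then have "u \<in> affine hull ?N"
    by (intro aback hull_inc) auto
  then have N2: "T \<subseteq> affine hull ?N" using hull_subset[of ?N affine] by auto
  have "affine hull ?N = affine hull T"
    using N1 N2 by (metis hull_hull hull_mono subset_antisym)
  then have ad: "aff_dim ?N = aff_dim T" by (metis aff_dim_affine_hull)
  have cd: "card ?N = card T" using fin mT uT by (simp add: card_insert_disjoint card_gt_0_iff) (metis card_gt_0_iff empty_iff Suc_pred)
  show "\<not> affine_dependent ?N"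
    using T ad cd fin by (simp add: affine_independent_iff_card)
qed


lemma norm_mid_less:
  fixes u v :: "'a::real_inner"
  assumes uv: "u \<noteq> v" and le: "norm v \<le> norm u"
  shows "(norm (midpoint u v))\<^sup>2 < (norm u)\<^sup>2"
proof -
  have e: "4 * (norm (midpoint u v))\<^sup>2 + (norm (u - v))\<^sup>2 = 2 * (norm u)\<^sup>2 + 2 * (norm v)\<^sup>2"
    unfolding power2_norm_eq_inner midpoint_def
    by (simp add: inner_add_left inner_add_right inner_diff_left inner_diff_right inner_commute algebra_simps)
  have "(norm (u - v))\<^sup>2 > 0" using uv by simp
  moreover have "(norm v)\<^sup>2 \<le> (norm u)\<^sup>2" using le by (simp add: power_mono)
  ultimately show ?thesis using e by linarith
qed

lemma normsq_int:
  fixes w :: "real ^ 'n"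
  assumes "lattice_point w"
  shows "(norm w)\<^sup>2 \<in> \<int>"
proof -
  have "(norm w)\<^sup>2 = (\<Sum>i\<in>UNIV. w $ i * w $ i)"
    by (simp add: power2_norm_eq_inner inner_vec_def)
  also have "\<dots> \<in> \<int>" using assms unfolding lattice_point_def
    by (intro Ints_sum Ints_mult) auto
  finally show ?thesis .
qed

lemma midpoint_lattice:
  fixes u v :: "real ^ 'n"
  assumes "lattice_point u" "lattice_point v" "{i. odd \<lfloor>u $ i\<rfloor>} = {i. odd \<lfloor>v $ i\<rfloor>}"
  shows "lattice_point (midpoint u v)"
  unfolding lattice_point_def
proof
  fix i
  obtain a where a: "u $ i = of_int a" using assms(1) unfolding lattice_point_def by (metis Ints_cases)
  obtain b where b: "v $ i = of_int b" using assms(2) unfolding lattice_point_def by (metis Ints_cases)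
  have "odd \<lfloor>u $ i\<rfloor> \<longleftrightarrow> odd \<lfloor>v $ i\<rfloor>" using assms(3) by (simp add: set_eq_iff)
  then have "odd a \<longleftrightarrow> odd b" using a b by simp
  then have "even (a + b)" by auto
  then have "a + b = 2 * ((a + b) div 2)" by simp
  then have "(u $ i + v $ i) / 2 = of_int ((a + b) div 2)"
    unfolding a b by (metis of_int_add of_int_mult of_int_numeral nonzero_mult_div_cancel_left zero_neq_numeral)
  then show "midpoint u v $ i \<in> \<int>" by (simp add: midpoint_def)
qed

theorem theorem12:
  fixes P :: "(real ^ 'n) set"
  assumes "lattice_polytope P"
    and "aff_dim P = int CARD('n)"
    and "\<forall>x \<in> interior P. \<not> lattice_point x"
    and "\<forall>F. F facet_of P \<longrightarrow> (\<exists>k. k simplex F)"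
  shows "card {v. v extreme_point_of P} \<le> 2 ^ CARD('n)"
proof -
  define V where "V = {v. v extreme_point_of P}"
  have polyP: "polytope P" using assms(1) unfolding lattice_polytope_def by blast
  have phP: "polyhedron P" using polyP by (rule polytope_imp_polyhedron)
  have finV: "finite V" unfolding V_def by (rule finite_polyhedron_extreme_points[OF phP])
  have convP: "convex P" using polyP by (rule polytope_imp_convex)
  have riP: "rel_interior P = interior P"
    using assms(2) by (intro interior_rel_interior) simp
  have bd: "P - interior P = \<Union>{F. F facet_of P}"
    using rel_boundary_of_polyhedron[OF phP] riP by simp
  define Good where "Good W \<longleftrightarrow> finite W \<and> W \<subseteq> P \<and> (\<forall>w\<in>W. lattice_point w) \<and> card W = card V
      \<and> (\<forall>F. F facet_of P \<longrightarrow> \<not> affine_dependent (W \<inter> F))" for W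
  define f where "f W = (\<Sum>w\<in>W. (norm w)\<^sup>2)" for W :: "(real^'n) set"
  have fint: "f W \<in> \<int>" if "\<forall>w\<in>W. lattice_point w" for W
    unfolding f_def using that normsq_int by (intro Ints_sum) blast
  have fnn: "f W \<ge> 0" for W unfolding f_def by (intro sum_nonneg) auto
  have GoodV: "Good V"
    unfolding Good_def
  proof (intro conjI allI impI ballI)
    show "finite V" by (rule finV)
    show "V \<subseteq> P" unfolding V_def extreme_point_of_def by blast
    show "card V = card V" by simp
  next
    fix w assume "w \<in> V"
    then show "lattice_point w" using assms(1) unfolding V_def lattice_polytope_def by blast
  next
    fix F assume F: "F facet_of P"
    then have Fface: "F face_of P" unfolding facet_of_def by blast
    obtain k where "k simplex F" using assms(4) F by blast
    then obtain C where C: "\<not> affine_dependent C" "F = convex hull C" unfolding simplex_def by blast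
    have "V \<inter> F = C"
    proof -
      have "V \<inter> F = {v. v extreme_point_of F}"
        unfolding V_def using extreme_point_of_face[OF Fface] by blast
      also have "\<dots> = C" using extreme_point_of_convex_hull_affine_independent[OF C(1)] C(2) by blast
      finally show ?thesis .
    qed
    then show "\<not> affine_dependent (V \<inter> F)" using C(1) by simp
  qed
  have step: "\<exists>W'. Good W' \<and> f W' < f W"
    if GW: "Good W" and uW: "u \<in> W" and vW: "v \<in> W" and uv: "u \<noteq> v" and nle: "norm v \<le> norm u"
      and ml: "lattice_point (midpoint u v)" for W u v
  proof -
    let ?m = "midpoint u v"
    have finW: "finite W" and WP: "W \<subseteq> P" and Wl: "\<forall>w\<in>W. lattice_point w" and cW: "card W = card V"
      and Wi: "\<And>F. F facet_of P \<Longrightarrow> \<not> affine_dependent (W \<inter> F)"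
      using GW unfolding Good_def by auto
    have uP: "u \<in> P" and vP: "v \<in> P" using uW vW WP by auto
    have meq: "?m = (1/2) *\<^sub>R u + (1/2) *\<^sub>R v" by (simp add: midpoint_def scaleR_right_distrib)
    have "(1/2) *\<^sub>R u + (1/2) *\<^sub>R v \<in> P"
      using convP uP vP by (intro convexD) auto
    then have mP: "?m \<in> P" by (simp only: meq[symmetric])
    have "?m \<notin> interior P" using assms(3) ml by blast
    then obtain F where F: "F facet_of P" and mF: "?m \<in> F" using bd mP by blast
    have seg: "?m \<in> open_segment u v" using uv by simp
    have segH: "u \<in> H \<and> v \<in> H" if "H facet_of P" "?m \<in> H" for H
      using face_ofD[OF _ seg uP vP] that unfolding facet_of_def by blast
    have "?m \<notin> W \<inter> F"
      using mid_indep(1)[OF Wi[OF F]] segH[OF F mF] uW vW uv by blast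
    then have mW: "?m \<notin> W" using mF by blast
    define W' where "W' = insert ?m (W - {u})"
    have GW': "Good W'"
      unfolding Good_def
    proof (intro conjI allI impI ballI)
      show "finite W'" unfolding W'_def using finW by simp
      show "W' \<subseteq> P" unfolding W'_def using mP WP by blast
      show "card W' = card V" unfolding W'_def using finW mW uW cW
        by (simp add: card_insert_disjoint) (metis card_gt_0_iff empty_iff Suc_pred)
    next
      fix w assume "w \<in> W'"
      then show "lattice_point w" unfolding W'_def using ml Wl by blast
    next
      fix H assume H: "H facet_of P"
      show "\<not> affine_dependent (W' \<inter> H)"
      proof (cases "?m \<in> H")
        case True
        then have uvH: "u \<in> H" "v \<in> H" using segH[OF H] by auto
        have "W' \<inter> H = insert ?m ((W \<inter> H) - {u})" unfolding W'_def using True by blast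
        then show ?thesis using mid_indep(2)[OF Wi[OF H]] uvH uW vW uv by simp
      next
        case False
        have "W' \<inter> H \<subseteq> W \<inter> H" unfolding W'_def using False by blast
        then show ?thesis using Wi[OF H] affine_dependent_subset by blast
      qed
    qed
    have "f W' = (norm ?m)\<^sup>2 + f (W - {u})" unfolding W'_def f_def using finW mW by simp
    moreover have "f W = (norm u)\<^sup>2 + f (W - {u})" unfolding f_def using finW uW by (simp add: sum.remove)
    moreover have "(norm ?m)\<^sup>2 < (norm u)\<^sup>2" using norm_mid_less[OF uv nle] .
    ultimately have "f W' < f W" by linarith
    then show ?thesis using GW' by blast
  qed
  obtain W where GW: "Good W" and minW: "\<And>W'. Good W' \<Longrightarrow> nat \<lfloor>f W\<rfloor> \<le> nat \<lfloor>f W'\<rfloor>"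
    using ex_has_least_nat[of Good V "\<lambda>W. nat \<lfloor>f W\<rfloor>"] GoodV by blast
  have Wl: "\<forall>w\<in>W. lattice_point w" using GW unfolding Good_def by blast
  have nocong: "u = v" if uW: "u \<in> W" and vW: "v \<in> W" and ml: "lattice_point (midpoint u v)" for u v
  proof (rule ccontr)
    assume uv: "u \<noteq> v"
    have "\<exists>W'. Good W' \<and> f W' < f W"
    proof (cases "norm v \<le> norm u")
      case True show ?thesis using step[OF GW uW vW uv True ml] .
    next
      case False
      then have "norm u \<le> norm v" by simp
      moreover have "v \<noteq> u" using uv by simp
      moreover have "lattice_point (midpoint v u)" using ml by (simp add: midpoint_sym)
      ultimately show ?thesis using step[OF GW vW uW] by blast
    qed
    then obtain W' where GW': "Good W'" and lt: "f W' < f W" by blast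
    have W'l: "\<forall>w\<in>W'. lattice_point w" using GW' unfolding Good_def by blast
    obtain a where a: "f W' = of_int a" using fint[OF W'l] by (metis Ints_cases)
    obtain b where b: "f W = of_int b" using fint[OF Wl] by (metis Ints_cases)
    have "a < b" using lt a b by simp
    moreover have "0 \<le> a" using fnn[of W'] a by simp
    ultimately have "nat \<lfloor>f W'\<rfloor> < nat \<lfloor>f W\<rfloor>" using a b by simp
    with minW[OF GW'] show False by simp
  qed
  define h where "h w = {i. odd \<lfloor>w $ i\<rfloor>}" for w :: "real^'n"
  have injh: "inj_on h W"
  proof (rule inj_onI)
    fix u v assume uW: "u \<in> W" and vW: "v \<in> W" and huv: "h u = h v"
    have "lattice_point (midpoint u v)"
      using midpoint_lattice[of u v] Wl uW vW huv unfolding h_def by blast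
    then show "u = v" using nocong uW vW by blast
  qed
  have "card W \<le> card (Pow (UNIV::'n set))"
    by (rule card_inj_on_le[OF injh]) auto
  then show ?thesis using GW unfolding Good_def V_def by (simp add: card_Pow)
qed

end
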